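(* For every $A>0$ there is a constant $C$ depending only on $A$ such that if $|c|\le A$, then every $C^1$ solution $U$ of $(1-x^2)U'+2xU+\frac12U^2=P_c(x)$ in $(-1,1)$ satisfies $|U(x)|\le C$ for all $-1<x<1$.
   Context: $c=(c_1,c_2,c_3)\in\mathbb{R}^3$ and $P_c(x):=c_1(1-x)+c_2(1+x)+c_3(1-x^2)$. *)

theory Defs
  imports "HOL-Analysis.Analysis"
begin

definition P :: "real^3 \<Rightarrow> real \<Rightarrow> real" where
  "P c x = c$1 * (1 - x) + c$2 * (1 + x) + c$3 * (1 - x^2)"

end

theory Submission
  imports Defs
begin

lemma key_ineq:
  fixes t u M :: real
  assumes M: "M \<ge> 0" and t: "\<bar>t\<bar> < 1" and u: "u \<ge> 8 + M" and q: "\<bar>q\<bar> \<le> M"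
  shows "q - 2 * t * u - (1/2) * u^2 \<le> - (u^2 / 4)"
proof -
  have u0: "u \<ge> 0" using u M by linarith
  have "(8 + M) * u \<le> u * u" using u u0 by (rule mult_right_mono)
  hence f1: "8 * u + M * u \<le> u^2" by (simp add: distrib_right power2_eq_square)
  have f2: "M * 8 \<le> M * u" using u M by (intro mult_left_mono) auto
  have "\<bar>t\<bar> * u \<le> 1 * u" using t u0 by (intro mult_right_mono) auto
  hence "\<bar>t * u\<bar> \<le> u" using u0 by (simp add: abs_mult)
  hence f3: "- (2 * t * u) \<le> 2 * u" by linarith
  have f4: "q \<le> M" using q by linarith
  show ?thesis using f1 f2 f3 f4 M by linarith
qed

lemma der_helper:
  fixes U :: "real \<Rightarrow> real"
  shows "U t > 0 \<Longrightarrow> 1 + t > 0 \<Longrightarrow> 1 - t > 0 \<Longrightarrow> (U has_real_derivative u) (at t) \<Longrightarrow> ((\<lambda>t. 1 / U t - (ln (1 + t) - ln (1 - t)) / 8) has_real_derivative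
        (- u / (U t)^2 - (1 / (1 + t) + 1 / (1 - t)) / 8)) (at t)"
  apply (rule derivative_eq_intros refl | assumption | simp)+
  apply (simp add: power2_eq_square)
  done

lemma upper:
  fixes U U' Q :: "real \<Rightarrow> real" and M :: real
  assumes M: "M \<ge> 0"
    and Q: "\<forall>x\<in>{-1<..<1}. \<bar>Q x\<bar> \<le> M"
    and D: "\<forall>x\<in>{-1<..<1}. (U has_real_derivative U' x) (at x)"
    and E: "\<forall>x\<in>{-1<..<1}. (1 - x^2) * U' x + 2 * x * U x + (1/2) * (U x)^2 = Q x"
    and x0: "x0 \<in> {-1<..<1}"
  shows "U x0 \<le> 8 + M"
proof (rule ccontr)
  assume "\<not> U x0 \<le> 8 + M"
  hence big: "U x0 > 8 + M" by simp
  have key: "(1 - t^2) * U' t \<le> - ((U t)^2 / 4)" if "t \<in> {-1<..<1}" "U t \<ge> 8 + M" for t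
  proof -
    have t1: "\<bar>t\<bar> < 1" using that by auto
    have q: "\<bar>Q t\<bar> \<le> M" using Q that(1) by blast
    have e: "(1 - t^2) * U' t = Q t - 2 * t * U t - (1/2) * (U t)^2" using E that(1) by force
    from key_ineq[OF M t1 that(2) q] e show ?thesis by linarith
  qed
  have neg: "U' t < 0" if "t \<in> {-1<..<1}" "U t \<ge> 8 + M" for t
  proof -
    have "\<bar>t\<bar> < 1" using that by auto
    hence "t^2 < 1" by (simp add: abs_square_less_1)
    moreover have "(U t)^2 > 0" using that M by auto
    ultimately have "(1 - t^2) * U' t < 0" "1 - t^2 > 0" using key[OF that] by linarith+
    thus ?thesis by (simp add: mult_less_0_iff)
  qed
  have region: "U x \<ge> U x0" if xin: "x \<in> {-1<..x0}" for x
  proof (rule ccontr)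
    assume "\<not> U x \<ge> U x0"
    hence lt: "U x < U x0" by simp
    have sub: "{x..x0} \<subseteq> {-1<..<1}" using that x0 by auto
    have "continuous_on {x..x0} U"
      using D sub by (intro continuous_at_imp_continuous_on) (auto intro: DERIV_isCont)
    then obtain m where m: "m \<in> {x..x0}" "\<forall>y\<in>{x..x0}. U y \<le> U m"
      using continuous_attains_sup[of "{x..x0}" U] xin by auto
    have "U m \<ge> U x0" using m that by auto
    hence mbig: "U m \<ge> 8 + M" using big by linarith
    have "m \<noteq> x" using lt \<open>U m \<ge> U x0\<close> by auto
    hence mx: "m > x" using m(1) by auto
    have mI: "m \<in> {-1<..<1}" using m sub by auto
    obtain d where d: "d > 0" "\<forall>h>0. h < d \<longrightarrow> U m < U (m - h)"
      using DERIV_neg_dec_left[OF D[rule_format, OF mI] neg[OF mI mbig]] by blast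
    define h where "h = min (d/2) (m - x)"
    have "h > 0" "h < d" using d mx by (auto simp: h_def)
    hence "U m < U (m - h)" using d by auto
    moreover have "m - h \<in> {x..x0}" using m mx \<open>h > 0\<close> by (auto simp: h_def)
    ultimately show False using m by force
  qed
  define L where "L = (\<lambda>t::real. (ln (1 + t) - ln (1 - t)) / 8)"
  define B where "B = L x0 - 1 / U x0"
  define e where "e = min (exp (8 * B)) ((x0 + 1) / 2)"
  define x where "x = -1 + e"
  have e0: "e > 0" using x0 by (auto simp: e_def)
  have e1: "e \<le> (x0 + 1)/2" unfolding e_def by (rule min.cobounded2)
  have xI: "x \<in> {-1<..x0}" using e0 e1 x0 by (auto simp: x_def)
  have "ln (1 + x) \<le> 8 * B"
  proof -
    have "ln (1 + x) = ln e" by (simp add: x_def)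
    also have "\<dots> \<le> ln (exp (8 * B))" using e0 by (subst ln_le_cancel_iff) (auto simp: e_def)
    finally show ?thesis by simp
  qed
  moreover have "ln (1 - x) \<ge> 0" using e1 x0 by (auto simp: x_def)
  ultimately have LB: "L x \<le> B" by (simp add: L_def)
  have "(\<lambda>t. 1 / U t - L t) x \<le> (\<lambda>t. 1 / U t - L t) x0"
  proof (rule DERIV_nonneg_imp_nondecreasing[where f="\<lambda>t. 1 / U t - L t"])
    show "x \<le> x0" using xI by auto
    fix t assume tt: "x \<le> t" "t \<le> x0"
    have tI: "t \<in> {-1<..<1}" using tt xI x0 by auto
    have tR: "t \<in> {-1<..x0}" using tt xI by auto
    have Ut: "U t \<ge> 8 + M" using region[OF tR] big by linarith
    hence Upos: "U t > 0" using M by linarith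
    have p1: "1 + t > 0" "1 - t > 0" using tI by auto
    have der: "((\<lambda>t. 1 / U t - L t) has_real_derivative
        (- U' t / (U t)^2 - (1 / (1 + t) + 1 / (1 - t)) / 8)) (at t)"
      unfolding L_def
      using der_helper[OF Upos p1 D[rule_format, OF tI]] .
    have "(1 - t^2) * (- U' t) \<ge> (U t)^2 / 4" using key[OF tI Ut] by linarith
    have pos: "1 - t^2 > 0" using tI by (simp add: abs_square_less_1 abs_less_iff)
    have id: "(1 / (1 + t) + 1 / (1 - t)) / 8 = 1 / (4 * (1 - t^2))"
    proof -
      have f: "1 - t^2 = (1+t)*(1-t)" by (simp add: power2_eq_square algebra_simps)
      have "(1 / (1 + t) + 1 / (1 - t)) / 8 = 1 / (4 * ((1+t)*(1-t)))"
        using p1 by (simp add: divide_simps)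
      thus ?thesis by (simp only: f)
    qed
    have "- U' t \<ge> (U t)^2 / (4 * (1 - t^2))"
      using \<open>(1 - t^2) * (- U' t) \<ge> (U t)^2 / 4\<close> pos by (simp add: field_simps)
    hence "- U' t / (U t)^2 \<ge> 1 / (4 * (1 - t^2))"
      using Upos pos by (simp add: field_simps)
    hence "- U' t / (U t)^2 - (1 / (1 + t) + 1 / (1 - t)) / 8 \<ge> 0" using id by linarith
    with der show "\<exists>y. ((\<lambda>t. 1 / U t - L t) has_real_derivative y) (at t) \<and> 0 \<le> y" by blast
  qed
  hence "1 / U x \<le> L x - B" by (simp add: B_def)
  also have "\<dots> \<le> 0" using LB by simp
  finally have "1 / U x \<le> 0" .
  moreover have "U x > 0" using region[OF xI] big M by linarith
  ultimately show False by simp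
qed

theorem lemma2p2:
  fixes A :: real
  assumes "A > 0"
  shows "\<exists>C::real. \<forall>(c::real^3) (U::real \<Rightarrow> real) (U'::real \<Rightarrow> real).
           norm c \<le> A \<longrightarrow>
           (\<forall>x\<in>{-1<..<1}. (U has_real_derivative U' x) (at x)) \<longrightarrow>
           continuous_on {-1<..<1} U' \<longrightarrow>
           (\<forall>x\<in>{-1<..<1}. (1 - x^2) * U' x + 2 * x * U x + (1/2) * (U x)^2 = P c x) \<longrightarrow>
           (\<forall>x\<in>{-1<..<1}. \<bar>U x\<bar> \<le> C)"
proof (intro exI allI impI ballI)
  fix c :: "real^3" and U U' :: "real \<Rightarrow> real" and x :: real
  assume nc: "norm c \<le> A"
    and D: "\<forall>x\<in>{-1<..<1}. (U has_real_derivative U' x) (at x)"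
    and E: "\<forall>x\<in>{-1<..<1}. (1 - x^2) * U' x + 2 * x * U x + (1/2) * (U x)^2 = P c x"
    and x: "x \<in> {-1<..<1}"
  have M: "5 * A \<ge> 0" using assms by simp
  have PB: "\<bar>P c y\<bar> \<le> 5 * A" if "y \<in> {-1<..<1}" for y
  proof -
    have c1: "\<bar>c$1\<bar> \<le> A" "\<bar>c$2\<bar> \<le> A" "\<bar>c$3\<bar> \<le> A"
      using nc norm_bound_component_le_cart by blast+
    have y1: "\<bar>1 - y\<bar> \<le> 2" "\<bar>1 + y\<bar> \<le> 2" using that by auto
    have "y^2 \<le> 1" using that by (simp add: abs_square_le_1 abs_le_iff)
    moreover have "y^2 \<ge> 0" by simp
    ultimately have y2: "\<bar>1 - y^2\<bar> \<le> 1" by linarith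
    have "\<bar>c$1 * (1 - y)\<bar> \<le> A * 2" unfolding abs_mult using c1 y1 by (intro mult_mono) auto
    moreover have "\<bar>c$2 * (1 + y)\<bar> \<le> A * 2" unfolding abs_mult using c1 y1 by (intro mult_mono) auto
    moreover have "\<bar>c$3 * (1 - y^2)\<bar> \<le> A * 1" unfolding abs_mult using c1 y2 by (intro mult_mono) auto
    ultimately show ?thesis unfolding P_def by linarith
  qed
  have up: "U x \<le> 8 + 5 * A"
    using upper[OF M _ D E x] PB by blast
  define V where "V = (\<lambda>y. - U (- y))"
  have DV: "\<forall>y\<in>{-1<..<1}. (V has_real_derivative U' (- y)) (at y)"
  proof
    fix y :: real assume y: "y \<in> {-1<..<1}"
    have "-y \<in> {-1<..<1}" using y by auto
    have d1: "(uminus has_real_derivative -1) (at y)" by (auto intro!: derivative_eq_intros)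
    have "((\<lambda>y. U (- y)) has_real_derivative U' (- y) * (- 1)) (at y)"
      by (rule DERIV_chain2[where g=uminus and x=y, OF D[rule_format, OF \<open>-y \<in> {-1<..<1}\<close>] d1])
    from DERIV_minus[OF this] show "(V has_real_derivative U' (- y)) (at y)"
      by (simp add: V_def)
  qed
  have EV: "\<forall>y\<in>{-1<..<1}. (1 - y^2) * U' (- y) + 2 * y * V y + (1/2) * (V y)^2 = P c (- y)"
  proof
    fix y :: real assume y: "y \<in> {-1<..<1}"
    have "-y \<in> {-1<..<1}" using y by auto
    from E[rule_format, OF this] show "(1 - y^2) * U' (- y) + 2 * y * V y + (1/2) * (V y)^2 = P c (- y)"
      by (simp add: V_def)
  qed
  have "-x \<in> {-1<..<1}" using x by auto
  have PB': "\<forall>y\<in>{-1<..<1}. \<bar>P c (- y)\<bar> \<le> 5 * A"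
  proof
    fix y :: real assume "y \<in> {-1<..<1}"
    hence "- y \<in> {-1<..<1}" by auto
    thus "\<bar>P c (- y)\<bar> \<le> 5 * A" by (rule PB)
  qed
  have "V (-x) \<le> 8 + 5 * A"
    using upper[OF M PB' DV EV \<open>-x \<in> {-1<..<1}\<close>] .
  hence "- U x \<le> 8 + 5 * A" by (simp add: V_def)
  with up show "\<bar>U x\<bar> \<le> 8 + 5 * A" by linarith
qed

end
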